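(* For $t\in T( *,\circ,x)$ define inductively a partial operator $\mathcal{C}(t)\in\mathcal{G}(\mathtt{ALD})$ by $\mathcal{C}(x)=\mathrm{id}$, $\mathcal{C}(t_1*t_2)=\mathcal{C}(t_1)\bullet\mathrm{sh}_1(\mathcal{C}(t_2))\bullet S^{+}_{\varepsilon}\bullet\mathrm{sh}_1(\mathcal{C}(t_1))^{-1}$, and $\mathcal{C}(t_1\circ t_2)=\mathcal{C}(t_1)\bullet\mathrm{sh}_1(\mathcal{C}(t_2))\bullet A^{+}_{\varepsilon}$. Then for every $t\in T( *,\circ,x)$ there exists $p$ such that, for every sufficiently large $n$, the operator $\mathcal{C}(t)$ maps $x^{[n]}$ to $t*x^{[n-p]}$.
   Context: $T( *,\circ,x)$: terms in the single variable $x$ with binary symbols $*,\circ$. Right vines: $x^{[1]}=x$, $x^{[n]}=x*x^{[n-1]}$. Addresses are finite sequences over $\{0,1\}$, $\varepsilon$ the empty one; $t/\alpha$ is the subterm at $\alpha$ ($0$ left, $1$ right). Partial operators act on the right ($t\cdot f$), $f\bullet g$ = "$f$ then $g$", and $f^{-1}$ is the inverse partial map. $S^{+}_{\alpha}$ is defined on $t$ iff $t/\alpha=t_1*(t_2\,\square\,t_3)$ with $\square\in\{*,\circ\}$, and replaces this subterm by $(t_1*t_2)\,\square\,(t_1*t_3)$; $A^{+}_{\alpha}$ is defined iff $t/\alpha=t_1*(t_2*t_3)$ and replaces it by $(t_1\circ t_2)*t_3$; $S^-_\alpha,A^-_\alpha$ are the inverse partial maps. $\mathcal{G}(\mathtt{ALD})$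 is the monoid of partial maps generated by all $S^{\pm}_\alpha,A^{\pm}_\alpha$. For a partial map $f$ and address $\beta$, $\mathrm{sh}_\beta(f)$ is the partial map applying $f$ to the $\beta$-th subterm (defined iff $t/\beta$ exists and is in the domain of $f$). *)

theory Defs
  imports Main
begin

datatype trm = X | Star trm trm | Circ trm trm

text \<open>Right vines: vine 1 = x, vine (n+1) = x * vine n (vine 0 is an irrelevant filler).\<close>
fun vine :: "nat \<Rightarrow> trm" where
  "vine 0 = X"
| "vine (Suc 0) = X"
| "vine (Suc (Suc n)) = Star X (vine (Suc n))"

text \<open>Partial operators are represented by their graphs (functional relations);
  (t, t') \<in> f means f is defined on t with value t'.  Then f \<bullet> g ("f then g")
  is relational composition f O g, the identity is Id and the inverse partial map
  is the converse relation.\<close>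
type_synonym op = "(trm \<times> trm) set"

text \<open>Addresses: lists over {0,1}, encoded as bool list (False = 0 = left, True = 1 = right).\<close>
type_synonym addr = "bool list"

fun sh :: "addr \<Rightarrow> op \<Rightarrow> op" where
  "sh [] f = f"
| "sh (False # a) f =
     {(Star u v, Star u' v) | u u' v. (u, u') \<in> sh a f} \<union>
     {(Circ u v, Circ u' v) | u u' v. (u, u') \<in> sh a f}"
| "sh (True # a) f =
     {(Star v u, Star v u') | u u' v. (u, u') \<in> sh a f} \<union>
     {(Circ v u, Circ v u') | u u' v. (u, u') \<in> sh a f}"

definition S_root :: op where
  "S_root = {(Star t1 (Star t2 t3), Star (Star t1 t2) (Star t1 t3)) | t1 t2 t3. True}
          \<union> {(Star t1 (Circ t2 t3), Circ (Star t1 t2) (Star t1 t3)) | t1 t2 t3. True}"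

definition A_root :: op where
  "A_root = {(Star t1 (Star t2 t3), Star (Circ t1 t2) t3) | t1 t2 t3. True}"

definition S_plus :: "addr \<Rightarrow> op" where "S_plus a = sh a S_root"
definition A_plus :: "addr \<Rightarrow> op" where "A_plus a = sh a A_root"

fun C :: "trm \<Rightarrow> op" where
  "C X = Id"
| "C (Star t1 t2) = C t1 O sh [True] (C t2) O S_plus [] O (sh [True] (C t1))\<inverse>"
| "C (Circ t1 t2) = C t1 O sh [True] (C t2) O A_plus []"

end

theory Submission
  imports Defs
begin

lemma vine_step: "n \<ge> 2 \<Longrightarrow> vine n = Star X (vine (n - 1))"
  by (cases n rule: vine.cases) auto

lemma shT: "(u, u') \<in> f \<Longrightarrow> (Star v u, Star v u') \<in> sh [True] f"
  by auto

lemma main: "\<exists>p::nat. \<exists>N::nat. \<forall>n\<ge>N. (vine n, Star t (vine (n - p))) \<in> C t"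
proof (induction t)
  case X
  show ?case
    by (rule exI[of _ 1], rule exI[of _ 2]) (auto simp: vine_step)
next
  case (Star t1 t2)
  from Star.IH(1) obtain p1 N1 where h1: "\<And>n. n \<ge> N1 \<Longrightarrow> (vine n, Star t1 (vine (n - p1))) \<in> C t1" by blast
  from Star.IH(2) obtain p2 N2 where h2: "\<And>n. n \<ge> N2 \<Longrightarrow> (vine n, Star t2 (vine (n - p2))) \<in> C t2" by blast
  show ?case
  proof (intro exI allI impI)
    fix n assume n: "n \<ge> N1 + N2 + p1 + p2"
    define m where "m = n - p1 - p2"
    have a: "(vine n, Star t1 (vine (n - p1))) \<in> C t1" using h1 n by simp
    have b: "(Star t1 (vine (n - p1)), Star t1 (Star t2 (vine m))) \<in> sh [True] (C t2)"
      using h2[of "n - p1"] n by (auto simp: m_def)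
    have c: "(Star t1 (Star t2 (vine m)), Star (Star t1 t2) (Star t1 (vine m))) \<in> S_plus []"
      by (auto simp: S_plus_def S_root_def)
    have d0: "(vine (n - p2), Star t1 (vine m)) \<in> C t1"
      using h1[of "n - p2"] n by (simp add: m_def add.commute)
    have d: "(Star (Star t1 t2) (Star t1 (vine m)), Star (Star t1 t2) (vine (n - p2))) \<in> (sh [True] (C t1))\<inverse>"
      using shT[OF d0] by auto
    show "(vine n, Star (Star t1 t2) (vine (n - p2))) \<in> C (Star t1 t2)"
      unfolding C.simps by (rule relcompI[OF a relcompI[OF b relcompI[OF c d]]])
  qed
next
  case (Circ t1 t2)
  from Circ.IH(1) obtain p1 N1 where h1: "\<And>n. n \<ge> N1 \<Longrightarrow> (vine n, Star t1 (vine (n - p1))) \<in> C t1" by blast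
  from Circ.IH(2) obtain p2 N2 where h2: "\<And>n. n \<ge> N2 \<Longrightarrow> (vine n, Star t2 (vine (n - p2))) \<in> C t2" by blast
  show ?case
  proof (intro exI allI impI)
    fix n assume n: "n \<ge> N1 + N2 + p1 + p2"
    define m where "m = n - p1 - p2"
    have a: "(vine n, Star t1 (vine (n - p1))) \<in> C t1" using h1 n by simp
    have b: "(Star t1 (vine (n - p1)), Star t1 (Star t2 (vine m))) \<in> sh [True] (C t2)"
      using h2[of "n - p1"] n by (auto simp: m_def)
    have c: "(Star t1 (Star t2 (vine m)), Star (Circ t1 t2) (vine m)) \<in> A_plus []"
      by (auto simp: A_plus_def A_root_def)
    show "(vine n, Star (Circ t1 t2) (vine (n - (p1 + p2)))) \<in> C (Circ t1 t2)"
      unfolding C.simps m_def[symmetric] diff_diff_add[symmetric] by (rule relcompI[OF a relcompI[OF b c]])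
  qed
qed

theorem lemma3p4:
  shows "\<forall>t. \<exists>p::nat. \<exists>N::nat. \<forall>n\<ge>N. (vine n, Star t (vine (n - p))) \<in> C t"
  using main by blast

end
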